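(* Let $\overline{\mathcal{O}}$, $\varphi$ be as in the context, let $K$ be a complete non-Archimedean field, and let $F:\overline{\mathcal{O}}\to K$ be a continuous non-vanishing function. Suppose that for all $n\in\mathbb{N}$ and all $\mathbf{x}=(\mathbf{x}_t)_t\in\overline{\mathcal{O}}$ with $|\mathbf{x}_t|<1$ for all $t$, $$\varphi^{(n)}(\mathbf{x})=\mathbf{x}\ \Longrightarrow\ \prod_{j=0}^{n-1}F\left(\varphi^{(j)}(\mathbf{x})\right)=1.$$ Then there exists a continuous non-vanishing function $G:\overline{\mathcal{O}}\to K$ such that $F(\mathbf{x})=\dfrac{G(\mathbf{x})}{G(\varphi(\mathbf{x}))}$ for all $\mathbf{x}\in\overline{\mathcal{O}}$.
   Context: Let $q$ be a prime power, $A=\mathbb{F}_q[\theta]$, $k=\mathbb{F}_q(\theta)$. Let $\mathcal{O}=\prod_t\mathcal{O}_t$ be a finite product with each $\mathcal{O}_t\in\{\mathbb{Z},A\}$; for each $t$ fix a prime number $p_t$ (if $\mathcal{O}_t=\mathbb{Z}$, with $\overline{\mathcal{O}}_t=\mathbb{Z}_{p_t}$) or a monic irreducible $v_t\in A$ (if $\mathcal{O}_t=A$, with $\overline{\mathcal{O}}_t=A_{v_t}$ the $v_t$-adic completion), and $\overline{\mathcal{O}}=\prod_t\overline{\mathcal{O}}_t$. Fix $\pi_t$ a positive power of $p_t$ resp. $v_t$. Each $\mathbf{x}_t\in\overline{\mathcal{O}}_t$ is uniquely $\sum_{i\ge0}x_{t,i}\pi_t^i$ with integer digits $0\le x_{t,i}<\pi_t$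 (case $\mathbb{Z}$) or polynomial digits of degree $<\deg\pi_t$ (case $A$); $\varphi_t(\mathbf{x}_t)=\sum_{i\ge0}x_{t,i+1}\pi_t^i$ and $\varphi(\mathbf{x})=(\varphi_t(\mathbf{x}_t))_t$; $\varphi^{(j)}$ is the $j$-fold iterate. If $\varphi^{(n)}(\mathbf{x})=\mathbf{x}$ then each component $\mathbf{x}_t$ is an element of $\mathbb{Q}$ resp. $k$ (a ratio of an element of $\mathcal{O}_t$ and $1-\pi_t^n$); here $|\cdot|$ denotes the usual real absolute value on $\mathbb{Q}$ and the $\infty$-adic absolute value $|f/g|=q^{\deg f-\deg g}$ on $k$. *)

theory Defs
  imports "HOL-Computational_Algebra.Computational_Algebra"
begin

text \<open>Points of Obar = prod_t Obar_t, via their pi_t-adic digit expansions.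
  There are m components of type Z (indices t < m) and l components of type A = F_q[theta]
  (indices t < l), where F_q is the finite field type 'f.  A point is a pair (xz, xa):
  xz t i is the i-th digit of the t-th Z-component, xa t i the i-th digit of the t-th
  A-component.  Digits at indices outside the range are fixed to 0.\<close>

type_synonym 'f pt = "(nat \<Rightarrow> nat \<Rightarrow> int) \<times> (nat \<Rightarrow> nat \<Rightarrow> 'f poly)"

definition Obar :: "nat \<Rightarrow> nat \<Rightarrow> (nat \<Rightarrow> int) \<Rightarrow> (nat \<Rightarrow> 'f::field poly) \<Rightarrow> 'f pt set" where
  "Obar m l piZ piA = {(xz, xa).
      (\<forall>t i. t < m \<longrightarrow> 0 \<le> xz t i \<and> xz t i < piZ t) \<and>
      (\<forall>t i. m \<le> t \<longrightarrow> xz t i = 0) \<and>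
      (\<forall>t i. t < l \<longrightarrow> degree (xa t i) < degree (piA t)) \<and>
      (\<forall>t i. l \<le> t \<longrightarrow> xa t i = 0)}"

definition phi :: "'f pt \<Rightarrow> 'f pt" where
  "phi x = (\<lambda>t i. fst x t (Suc i), \<lambda>t i. snd x t (Suc i))"

text \<open>Two points agree in their first D digits in every component
  (i.e. lie in the same ball of radius |pi_t|^D in each component).\<close>
definition agree :: "nat \<Rightarrow> 'f pt \<Rightarrow> 'f pt \<Rightarrow> bool" where
  "agree D x y \<longleftrightarrow> (\<forall>t i. i < D \<longrightarrow> fst x t i = fst y t i \<and> snd x t i = snd y t i)"

definition nonarch_abs :: "('k::field \<Rightarrow> real) \<Rightarrow> bool" where
  "nonarch_abs N \<longleftrightarrow>
     (\<forall>x. 0 \<le> N x) \<and> (\<forall>x. N x = 0 \<longleftrightarrow> x = 0) \<and>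
     (\<forall>x y. N (x * y) = N x * N y) \<and> (\<forall>x y. N (x + y) \<le> max (N x) (N y))"

definition abs_complete :: "('k::field \<Rightarrow> real) \<Rightarrow> bool" where
  "abs_complete N \<longleftrightarrow>
     (\<forall>X::nat \<Rightarrow> 'k. (\<forall>e>0. \<exists>M. \<forall>a\<ge>M. \<forall>b\<ge>M. N (X a - X b) < e) \<longrightarrow>
        (\<exists>L. \<forall>e>0. \<exists>M. \<forall>a\<ge>M. N (X a - L) < e))"

text \<open>Continuity of F : Obar -> K (product of the pi_t-adic topologies on Obar,
  topology of the absolute value N on K).\<close>
definition cont_Obar :: "nat \<Rightarrow> nat \<Rightarrow> (nat \<Rightarrow> int) \<Rightarrow> (nat \<Rightarrow> 'f::field poly) \<Rightarrow>
    ('k::field \<Rightarrow> real) \<Rightarrow> ('f pt \<Rightarrow> 'k) \<Rightarrow> bool" where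
  "cont_Obar m l piZ piA N F \<longleftrightarrow>
     (\<forall>x\<in>Obar m l piZ piA. \<forall>e>0. \<exists>D. \<forall>y\<in>Obar m l piZ piA. agree D x y \<longrightarrow> N (F y - F x) < e)"

text \<open>If phi^n(x) = x with n \<ge> 1, the Z-component x_t equals a/(1 - pi^n) in Q with
  a = sum_{i<n} x_{t,i} pi^i.\<close>
definition valZ :: "int \<Rightarrow> nat \<Rightarrow> (nat \<Rightarrow> int) \<Rightarrow> rat" where
  "valZ p n d = of_int (\<Sum>i<n. d i * p ^ i) / of_int (1 - p ^ n)"

text \<open>The infinity-adic absolute value |f/g| = q^(deg f - deg g) on k = F_q(theta),
  for g \<noteq> 0 (and |0| = 0), with q = card of UNIV of type 'f.\<close>
definition abs_inf :: "'f::{finite,field} poly \<Rightarrow> 'f poly \<Rightarrow> real" where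
  "abs_inf f g = (if f = 0 then 0
      else real (card (UNIV :: 'f set)) powr (real (degree f) - real (degree g)))"

text \<open>Absolute value of the A-component x_t = a/(1 - pi^n), a = sum_{i<n} x_{t,i} pi^i.\<close>
definition absA :: "'f::{finite,field} poly \<Rightarrow> nat \<Rightarrow> (nat \<Rightarrow> 'f poly) \<Rightarrow> real" where
  "absA p n d = abs_inf (\<Sum>i<n. d i * p ^ i) (1 - p ^ n)"

end

theory Submission
  imports Defs
begin


definition rel :: "('k::field \<Rightarrow> real) \<Rightarrow> real \<Rightarrow> 'k \<Rightarrow> 'k \<Rightarrow> bool" where
  "rel N e a b \<longleftrightarrow> N (a - b) < e * N b"

locale na =
  fixes N :: "'k::field \<Rightarrow> real"
  assumes na: "nonarch_abs N"
begin

lemma N_nonneg: "0 \<le> N x" using na unfolding nonarch_abs_def by blast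
lemma N_zero_iff: "N x = 0 \<longleftrightarrow> x = 0" using na unfolding nonarch_abs_def by blast
lemma N_mult: "N (x * y) = N x * N y" using na unfolding nonarch_abs_def by blast
lemma N_ultra: "N (x + y) \<le> max (N x) (N y)" using na unfolding nonarch_abs_def by blast

lemma N_0 [simp]: "N 0 = 0" using N_zero_iff by simp

lemma N_one: "N 1 = 1"
proof -
  have "N 1 = N 1 * N 1" using N_mult[of 1 1] by simp
  moreover have "N 1 \<noteq> 0" using N_zero_iff by simp
  ultimately show ?thesis by simp
qed

lemma N_minus: "N (- x) = N x"
proof -
  have "N (-1) * N (-1) = 1" using N_mult[of "-1" "-1"] N_one by simp
  moreover have "0 \<le> N (-1)" by (rule N_nonneg)
  moreover have "(N (-1) - 1) * (N (-1) + 1) = N (-1) * N (-1) - 1" by (simp add: algebra_simps)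
  ultimately have "(N (-1) - 1) * (N (-1) + 1) = 0" by simp
  hence "N (-1) = 1" using \<open>0 \<le> N (-1)\<close> by simp
  thus ?thesis using N_mult[of "-1" x] by simp
qed

lemma N_sym: "N (a - b) = N (b - a)"
  using N_minus[of "a - b"] by simp

lemma N_tri: "N (a - c) \<le> max (N (a - b)) (N (b - c))"
  using N_ultra[of "a - b" "b - c"] by simp

lemma N_inverse: "N (inverse x) = inverse (N x)"
proof (cases "x = 0")
  case True thus ?thesis using N_zero_iff by simp
next
  case False
  have "N (inverse x) * N x = 1" using N_mult[of "inverse x" x] False N_one by simp
  thus ?thesis by (metis inverse_unique mult.commute)
qed

lemma N_pos: "x \<noteq> 0 \<Longrightarrow> 0 < N x"
  using N_zero_iff[of x] N_nonneg[of x] by linarith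

lemma N_close: assumes "N (a - b) < N b" shows "N a = N b"
proof -
  have "N a \<le> max (N (a - b)) (N b)" using N_ultra[of "a - b" b] by simp
  hence 1: "N a \<le> N b" using assms by simp
  have "N b \<le> max (N (b - a)) (N a)" using N_ultra[of "b - a" a] by simp
  hence "N b \<le> max (N (a - b)) (N a)" using N_sym by simp
  thus ?thesis using 1 assms by linarith
qed

lemma rel_N: assumes "rel N e a b" "e \<le> 1" shows "N a = N b" "b \<noteq> 0" "a \<noteq> 0"
proof -
  have 0: "N (a - b) < e * N b" using assms unfolding rel_def by simp
  hence "N b \<noteq> 0" using N_nonneg[of "a-b"] by auto
  thus "b \<noteq> 0" using N_zero_iff by simp
  have "e * N b \<le> N b" using mult_right_mono[OF assms(2) N_nonneg[of b]] by simp
  thus 1: "N a = N b" using N_close[of a b] 0 by linarith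
  thus "a \<noteq> 0" using \<open>N b \<noteq> 0\<close> by auto
qed

lemma rel_sym: assumes "rel N e a b" "e \<le> 1" shows "rel N e b a"
proof -
  have "N a = N b" using rel_N[OF assms] by simp
  thus ?thesis using assms(1) N_sym[of a b] unfolding rel_def by simp
qed

lemma rel_trans: assumes "rel N e a b" "rel N e b c" "e \<le> 1" shows "rel N e a c"
proof -
  have "N b = N c" using rel_N(1)[OF assms(2,3)] .
  thus ?thesis using assms N_tri[of a c b] unfolding rel_def by auto
qed

lemma rel_refl: assumes "0 < e" "b \<noteq> 0" shows "rel N e b b"
  using assms N_zero_iff N_nonneg[of b] unfolding rel_def
  by (simp add: order_le_less)

lemma rel_mono: assumes "rel N e a b" "e \<le> e'" shows "rel N e' a b"
proof -
  have "e * N b \<le> e' * N b" using mult_right_mono[OF assms(2) N_nonneg[of b]] .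
  thus ?thesis using assms(1) unfolding rel_def by simp
qed

lemma rel_mult: assumes "rel N e a b" "rel N e c d" "e \<le> 1" shows "rel N e (a * c) (b * d)"
proof -
  have Nab: "N a = N b" using rel_N(1)[OF assms(1,3)] .
  have "a * c - b * d = a * (c - d) + (a - b) * d" by (simp add: algebra_simps)
  hence "N (a * c - b * d) = N (a * (c - d) + (a - b) * d)" by simp
  hence "N (a * c - b * d) \<le> max (N (a * (c - d))) (N ((a - b) * d))" using N_ultra by simp
  also have "\<dots> = max (N b * N (c - d)) (N (a - b) * N d)" using N_mult Nab by simp
  also have "\<dots> < e * (N b * N d)"
  proof -
    have "N b > 0" using rel_N(2)[OF assms(1,3)] N_pos by simp
    have "N d > 0" using rel_N(2)[OF assms(2,3)] N_pos by simp
    have "N b * N (c - d) < N b * (e * N d)" using assms(2) \<open>N b > 0\<close> unfolding rel_def by simp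
    moreover have "N (a - b) * N d < e * N b * N d" using assms(1) \<open>N d > 0\<close> unfolding rel_def by simp
    ultimately show ?thesis by (simp add: algebra_simps)
  qed
  finally show ?thesis unfolding rel_def using N_mult[of b d] by simp
qed

lemma rel_prod: assumes "finite S" "0 < e" "e \<le> 1" "\<forall>i\<in>S. rel N e (f i) (g i)"
  shows "rel N e (prod f S) (prod g S)"
  using assms(1,4)
proof (induction S rule: finite_induct)
  case empty thus ?case using rel_refl assms by simp
next
  case (insert x S)
  have "rel N e (f x) (g x)" using insert by simp
  moreover have "rel N e (prod f S) (prod g S)" using insert by simp
  ultimately have "rel N e (f x * prod f S) (g x * prod g S)" by (rule rel_mult[OF _ _ assms(3)])
  thus ?case using insert(1,2) by simp
qed

lemma rel_inverse: assumes "rel N e a b" "e \<le> 1" shows "rel N e (inverse a) (inverse b)"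
proof -
  have Nab: "N a = N b" and b: "b \<noteq> 0" and a: "a \<noteq> 0" using rel_N[OF assms] by auto
  have Nbp: "N b > 0" using b N_pos by simp
  have "inverse a - inverse b = (b - a) * inverse a * inverse b" using a b by (simp add: field_simps)
  hence "N (inverse a - inverse b) = N (b - a) * N (inverse a) * N (inverse b)" by (simp add: N_mult)
  also have "\<dots> = N (a - b) * (inverse (N b) * inverse (N b))" using N_sym[of b a] Nab by (simp add: N_inverse)
  also have "\<dots> < e * N b * (inverse (N b) * inverse (N b))"
  proof -
    have pos: "0 < inverse (N b) * inverse (N b)" using Nbp by simp
    have h: "N (a - b) < e * N b" using assms(1) unfolding rel_def .
    show ?thesis by (rule mult_strict_right_mono[OF h pos])
  qed
  also have "\<dots> = e * N (inverse b)" using Nbp N_inverse[of b] by simp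
  finally show ?thesis unfolding rel_def .
qed

lemma rel_eq: assumes "b \<noteq> 0" "\<And>e. 0 < e \<Longrightarrow> e \<le> 1 \<Longrightarrow> rel N e a b" shows "a = b"
proof (rule ccontr)
  assume "a \<noteq> b"
  hence p: "N (a - b) > 0" using N_pos by simp
  define e where "e = min 1 (N (a - b) / (N b + 1))"
  have e: "0 < e" "e \<le> 1" using p N_nonneg[of b] unfolding e_def by auto
  have "e \<le> N (a - b) / (N b + 1)" unfolding e_def by (rule min.cobounded2)
  hence "e * N b \<le> N (a - b) / (N b + 1) * N b" using mult_right_mono[OF _ N_nonneg[of b]] by blast
  also have "\<dots> = N (a - b) * (N b / (N b + 1))" by simp
  also have "\<dots> \<le> N (a - b)"
  proof -
    have "N b / (N b + 1) \<le> 1" using N_nonneg[of b] by simp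
    thus ?thesis using mult_left_mono[of "N b / (N b + 1)" 1 "N (a - b)"] p by simp
  qed
  finally show False using assms(2)[OF e] unfolding rel_def by simp
qed

end



definition zp :: "'f::field pt" where "zp = (\<lambda>t i. 0, \<lambda>t i. 0)"
definition sh :: "nat \<Rightarrow> 'f::field pt \<Rightarrow> 'f pt" where
  "sh n x = (\<lambda>t i. if i < n then 0 else fst x t (i - n), \<lambda>t i. if i < n then 0 else snd x t (i - n))"
definition tr :: "nat \<Rightarrow> 'f::field pt \<Rightarrow> 'f pt" where
  "tr n x = (\<lambda>t i. if i < n then fst x t i else 0, \<lambda>t i. if i < n then snd x t i else 0)"
definition rp :: "nat \<Rightarrow> 'f::field pt \<Rightarrow> 'f pt" where
  "rp P y = (\<lambda>t i. fst y t (i mod P), \<lambda>t i. snd y t (i mod P))"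

lemma phi_pow: "(phi ^^ j) x = (\<lambda>t i. fst x t (i + j), \<lambda>t i. snd x t (i + j))"
  by (induction j) (auto simp: phi_def)

lemma Obar_iff: "x \<in> Obar m l piZ piA \<longleftrightarrow>
      (\<forall>t i. t < m \<longrightarrow> 0 \<le> fst x t i \<and> fst x t i < piZ t) \<and>
      (\<forall>t i. m \<le> t \<longrightarrow> fst x t i = 0) \<and>
      (\<forall>t i. t < l \<longrightarrow> degree (snd x t i) < degree (piA t)) \<and>
      (\<forall>t i. l \<le> t \<longrightarrow> snd x t i = 0)"
  by (cases x) (simp add: Obar_def)

lemma agree_mono: "agree D x y \<Longrightarrow> D' \<le> D \<Longrightarrow> agree D' x y"
  unfolding agree_def by auto
lemma agree_sym: "agree D x y \<Longrightarrow> agree D y x"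
  unfolding agree_def by auto
lemma agree_trans: "agree D x y \<Longrightarrow> agree D y z \<Longrightarrow> agree D x z"
  unfolding agree_def by auto
lemma agree_sh: "agree D x y \<Longrightarrow> agree (D + n) (sh n x) (sh n y)"
  unfolding agree_def sh_def by auto
lemma agree_sh_zp: "agree n zp (sh n x)"
  unfolding agree_def sh_def zp_def by auto
lemma agree_tr: "agree D x (tr D x)"
  unfolding agree_def tr_def by auto
lemma phi_tr: "phi (tr (Suc D) x) = tr D (phi x)"
  unfolding phi_def tr_def by (auto simp: fun_eq_iff)
lemma phi_zp: "phi zp = zp" unfolding phi_def zp_def by simp
lemma phi_pow_sh: "j \<le> K \<Longrightarrow> (phi ^^ j) (sh K x) = sh (K - j) x"
  unfolding phi_pow sh_def by (auto simp: fun_eq_iff)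
lemma phi_pow_sh2: "(phi ^^ (K + r)) (sh K x) = (phi ^^ r) x"
  unfolding phi_pow sh_def by (auto simp: fun_eq_iff)
lemma rp_periodic: "0 < P \<Longrightarrow> (phi ^^ P) (rp P y) = rp P y"
  unfolding phi_pow rp_def by (auto simp: fun_eq_iff)

lemma rp_agree:
  assumes "tr D x = x" "P = K + D" "j < P"
  shows "agree K ((phi ^^ j) (rp P (sh K x))) ((phi ^^ j) (sh K x))"
  unfolding agree_def
proof (intro allI impI)
  fix t i assume i: "i < K"
  have z1: "fst x t k = 0" "snd x t k = 0" if "D \<le> k" for k
    using that arg_cong[OF assms(1), of "\<lambda>x. fst x t k"] arg_cong[OF assms(1), of "\<lambda>x. snd x t k"]
    unfolding tr_def by auto
  show "fst ((phi ^^ j) (rp P (sh K x))) t i = fst ((phi ^^ j) (sh K x)) t i \<and>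
        snd ((phi ^^ j) (rp P (sh K x))) t i = snd ((phi ^^ j) (sh K x)) t i"
  proof (cases "i + j < P")
    case True thus ?thesis unfolding phi_pow rp_def by simp
  next
    case False
    hence md: "(i + j) mod P = i + j - P" using assms i by (simp add: mod_if le_mod_geq)
    have "i + j - P < K" using assms i by simp
    moreover have "D \<le> i + j - K" using False assms by simp
    ultimately show ?thesis unfolding phi_pow rp_def sh_def using md z1 False assms by auto
  qed
qed




lemma sum_digits_bound:
  fixes p :: int
  assumes "\<forall>i. 0 \<le> d i \<and> d i < p"
  shows "0 \<le> (\<Sum>i<n. d i * p ^ i) \<and> (\<Sum>i<n. d i * p ^ i) \<le> p ^ n - 1"
proof (induction n)
  case 0 thus ?case by simp
next
  case (Suc n)
  have p: "0 < p" using assms by (meson le_less_trans)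
  have "d n \<le> p - 1" using assms by force
  hence a: "d n * p ^ n \<le> (p - 1) * p ^ n" using p by (intro mult_right_mono) auto
  have b: "0 \<le> d n * p ^ n" using assms p by simp
  have "(p - 1) * p ^ n = p ^ Suc n - p ^ n" by (simp add: algebra_simps)
  thus ?case using Suc a b by simp
qed

lemma valZ_lt:
  assumes p: "2 \<le> p" and d: "\<forall>i. 0 \<le> d i \<and> d i < p" and d0: "d 0 = 0" and n: "0 < n"
  shows "\<bar>valZ p n d\<bar> < 1"
proof -
  obtain n' where n': "n = Suc n'" using n by (cases n) auto
  have dd: "\<forall>i. 0 \<le> d (Suc i) \<and> d (Suc i) < p" using d by simp
  define T where "T = (\<Sum>i<n'. d (Suc i) * p ^ i)"
  have eq: "(\<Sum>i<n. d i * p ^ i) = p * T"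
    unfolding n' sum.lessThan_Suc_shift T_def using d0 by (simp add: sum_distrib_left algebra_simps)
  have T: "0 \<le> T" "T \<le> p ^ n' - 1"
    using sum_digits_bound[OF dd, of n'] unfolding T_def by blast+
  have "p * T \<le> p * (p ^ n' - 1)" by (rule mult_left_mono) (use p T in auto)
  also have "\<dots> = p ^ n - p" unfolding n' by (simp add: algebra_simps)
  finally have S: "0 \<le> (\<Sum>i<n. d i * p ^ i)" "(\<Sum>i<n. d i * p ^ i) \<le> p ^ n - p"
    using eq T p by auto
  define S where "S = (\<Sum>i<n. d i * p ^ i)"
  have pn1: "1 \<le> (of_int p :: rat) ^ n" using p by (simp add: one_le_power)
  have S1: "0 \<le> S" "S < p ^ n - 1" using S p unfolding S_def by auto
  have "\<bar>valZ p n d\<bar> = of_int S / of_int (p ^ n - 1)"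
    unfolding valZ_def S_def[symmetric] using S1 pn1 by (simp add: abs_divide abs_of_nonpos)
  also have "\<dots> < 1"
  proof -
    have "(of_int S :: rat) < of_int (p ^ n - 1)" using S1 by (simp only: of_int_less_iff)
    moreover have "0 \<le> (of_int S :: rat)" using S1 by simp
    ultimately show ?thesis by simp
  qed
  finally show ?thesis .
qed

lemma card_ge2: "2 \<le> card (UNIV :: 'f::{finite,field} set)"
proof -
  have "card {0::'f, 1} = 2" by simp
  moreover have "card {0::'f, 1} \<le> card (UNIV :: 'f set)" by (rule card_mono) auto
  ultimately show ?thesis by simp
qed

lemma absA_lt:
  fixes p :: "'f::{finite,field} poly"
  assumes p: "0 < degree p" and d: "\<forall>i. degree (d i) < degree p" and n: "0 < n"
  shows "absA p n d < 1"
proof -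
  define S where "S = (\<Sum>i<n. d i * p ^ i)"
  have p0: "p \<noteq> 0" using p by auto
  have "degree S < n * degree p" unfolding S_def
  proof (rule degree_sum_less)
    fix i assume "i \<in> {..<n}"
    hence i: "i < n" by simp
    have "degree (d i * p ^ i) \<le> degree (d i) + degree (p ^ i)" by (rule degree_mult_le)
    also have "\<dots> = degree (d i) + i * degree p" using p0 by (simp add: degree_power_eq)
    also have "\<dots> < degree p + i * degree p" using d by simp
    also have "\<dots> = Suc i * degree p" by simp
    also have "\<dots> \<le> n * degree p" using i by (intro mult_right_mono) auto
    finally show "degree (d i * p ^ i) < n * degree p" .
  next
    show "0 < n * degree p" using n p by simp
  qed
  moreover have "degree (1 - p ^ n) = n * degree p"
  proof -
    have "1 - p ^ n = - (p ^ n) + 1" by simp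
    moreover have "degree (- (p ^ n) + 1) = degree (- (p ^ n))"
      by (rule degree_add_eq_left) (use n p p0 in \<open>simp add: degree_power_eq\<close>)
    ultimately show ?thesis using p0 by (simp add: degree_power_eq)
  qed
  ultimately have "degree S < degree (1 - p ^ n)" by simp
  hence lt: "real (degree S) - real (degree (1 - p ^ n)) < 0" by simp
  show ?thesis
  proof (cases "S = 0")
    case True thus ?thesis unfolding absA_def abs_inf_def S_def[symmetric] by simp
  next
    case False
    have "1 < real (card (UNIV :: 'f set))" using card_ge2[where 'f='f] by linarith
    thus ?thesis unfolding absA_def abs_inf_def S_def[symmetric] using False lt
      by (simp add: powr_less_one)
  qed
qed




lemma prod_split: "(\<Prod>j<K + (D::nat). f j) = (\<Prod>j<K. f j) * (\<Prod>r<D. f (K + r))"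
  by (induction D) (simp_all add: mult.assoc)

lemma ev_obtain: "eventually P sequentially \<Longrightarrow> \<exists>K. P K"
  by (auto simp: eventually_sequentially)

lemma tr_tr: "tr n (tr n x) = tr n x"
  unfolding tr_def by (auto simp: fun_eq_iff)

locale setting = na N
  for N :: "'k::field \<Rightarrow> real" +
  fixes m l :: nat and piZ :: "nat \<Rightarrow> int" and piA :: "nat \<Rightarrow> 'f::{finite,field} poly"
    and F :: "'f pt \<Rightarrow> 'k"
  assumes pZ: "\<forall>t<m. 2 \<le> piZ t" and pA: "\<forall>t<l. 0 < degree (piA t)"
    and cpl: "abs_complete N" and Fcont: "cont_Obar m l piZ piA N F"
    and Fnz: "\<forall>x\<in>Obar m l piZ piA. F x \<noteq> 0"
    and periodic: "\<forall>n::nat. \<forall>x\<in>Obar m l piZ piA.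
        (\<forall>t<m. \<bar>valZ (piZ t) n (fst x t)\<bar> < 1) \<longrightarrow>
        (\<forall>t<l. absA (piA t) n (snd x t) < 1) \<longrightarrow>
        (phi ^^ n) x = x \<longrightarrow> (\<Prod>j<n. F ((phi ^^ j) x)) = 1"
begin

abbreviation "Ob \<equiv> Obar m l piZ piA"

lemma zp_in: "zp \<in> Ob" using pZ pA by (auto simp: Obar_iff zp_def)
lemma sh_in: "x \<in> Ob \<Longrightarrow> sh n x \<in> Ob" using pZ pA by (auto simp: Obar_iff sh_def)
lemma tr_in: "x \<in> Ob \<Longrightarrow> tr n x \<in> Ob" using pZ pA by (auto simp: Obar_iff tr_def)
lemma phi_in: "x \<in> Ob \<Longrightarrow> phi x \<in> Ob" by (auto simp: Obar_iff phi_def)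
lemma phipow_in: "x \<in> Ob \<Longrightarrow> (phi ^^ j) x \<in> Ob" by (auto simp: Obar_iff phi_pow)
lemma rp_in: "x \<in> Ob \<Longrightarrow> rp P x \<in> Ob" by (auto simp: Obar_iff rp_def)

lemma F_zp: "F zp = 1"
proof -
  have "(\<forall>t<m. \<bar>valZ (piZ t) 1 (fst zp t)\<bar> < 1)" by (simp add: valZ_def zp_def)
  moreover have "(\<forall>t<l. absA (piA t) 1 (snd zp t) < 1)" by (simp add: absA_def abs_inf_def zp_def)
  moreover have "(phi ^^ 1) zp = zp" using phi_zp by simp
  ultimately have "(\<Prod>j<1. F ((phi ^^ j) zp)) = 1" using periodic zp_in by blast
  thus ?thesis by simp
qed

lemma Fc: assumes "x \<in> Ob" "0 < e"
  shows "eventually (\<lambda>D. \<forall>y\<in>Ob. agree D x y \<longrightarrow> rel N e (F y) (F x)) sequentially"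
proof -
  have "0 < e * N (F x)" using assms Fnz N_pos by simp
  then obtain D where D: "\<forall>y\<in>Ob. agree D x y \<longrightarrow> N (F y - F x) < e * N (F x)"
    using Fcont assms(1) unfolding cont_Obar_def by blast
  show ?thesis unfolding eventually_sequentially rel_def
    using D agree_mono by blast
qed

lemma tail: assumes "0 < e"
  shows "\<exists>D0. \<forall>y\<in>Ob. agree D0 zp y \<longrightarrow> rel N e (F y) 1"
  using ev_obtain[OF Fc[OF zp_in assms]] F_zp by simp

lemma prod_limit:
  fixes t :: "nat \<Rightarrow> 'k"
  assumes nz: "\<forall>i. t i \<noteq> 0" and tl: "\<And>e. 0 < e \<Longrightarrow> eventually (\<lambda>i. rel N e (t i) 1) sequentially"
  shows "\<exists>L. L \<noteq> 0 \<and> (\<forall>e>0. e \<le> 1 \<longrightarrow> eventually (\<lambda>K. rel N e (\<Prod>i<K. t i) L) sequentially)"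
proof -
  define X where "X K = (\<Prod>i<K. t i)" for K
  have Xnz: "X K \<noteq> 0" for K unfolding X_def using nz by simp
  have step: "\<exists>M. \<forall>a\<ge>M. \<forall>b\<ge>M. rel N e (X b) (X a)" if e: "0 < e" "e \<le> 1" for e
  proof -
    obtain M where M: "\<forall>i\<ge>M. rel N e (t i) 1" using tl[OF e(1)] unfolding eventually_sequentially by blast
    have one: "rel N e (X b) (X a)" if ab: "M \<le> a" "a \<le> b" for a b
    proof -
      have "X b = X a * prod t {a..<b}"
        unfolding X_def lessThan_atLeast0 using prod.atLeastLessThan_concat[of 0 a b t] ab by simp
      moreover have "rel N e (prod t {a..<b}) (prod (\<lambda>_. 1) {a..<b})"
        using M ab e by (intro rel_prod) auto
      hence "rel N e (prod t {a..<b}) 1" by simp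
      hence "rel N e (X a * prod t {a..<b}) (X a * 1)"
        by (rule rel_mult[OF rel_refl[OF e(1) Xnz] _ e(2)])
      ultimately show ?thesis by simp
    qed
    show ?thesis
    proof (intro exI allI impI)
      fix a b assume "M \<le> a" "M \<le> b"
      thus "rel N e (X b) (X a)"
        using one[of a b] one[of b a] rel_sym[OF _ e(2)] by (cases "a \<le> b") auto
    qed
  qed
  obtain M1 where M1: "\<forall>a\<ge>M1. \<forall>b\<ge>M1. rel N (1/2) (X b) (X a)" using step[of "1/2"] by auto
  define c where "c = N (X M1)"
  have c: "0 < c" unfolding c_def using Xnz N_pos by simp
  have Nc: "N (X a) = c" if "M1 \<le> a" for a
    using rel_N(1)[of "1/2" "X a" "X M1"] M1 that unfolding c_def by simp
  have cauchy: "\<forall>e>0. \<exists>M. \<forall>a\<ge>M. \<forall>b\<ge>M. N (X a - X b) < e"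
  proof (intro allI impI)
    fix e :: real assume e: "0 < e"
    define \<epsilon> where "\<epsilon> = min (1/2) (e / c)"
    have eps: "0 < \<epsilon>" "\<epsilon> \<le> 1" "\<epsilon> * c \<le> e" using e c unfolding \<epsilon>_def
      by (auto simp: min_def field_simps)
    obtain M2 where M2: "\<forall>a\<ge>M2. \<forall>b\<ge>M2. rel N \<epsilon> (X b) (X a)" using step[OF eps(1,2)] by auto
    show "\<exists>M. \<forall>a\<ge>M. \<forall>b\<ge>M. N (X a - X b) < e"
    proof (intro exI allI impI)
      fix a b assume "max M1 M2 \<le> a" "max M1 M2 \<le> b"
      hence "N (X a - X b) < \<epsilon> * N (X b)" "N (X b) = c" using M2 Nc unfolding rel_def by auto
      thus "N (X a - X b) < e" using eps by simp
    qed
  qed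
  obtain L where L: "\<forall>e>0. \<exists>M. \<forall>a\<ge>M. N (X a - L) < e"
    using cpl cauchy unfolding abs_complete_def by blast
  have NL: "N L = c"
  proof -
    obtain M where M: "\<forall>a\<ge>M. N (X a - L) < c" using L c by blast
    have "N (L - X (max M M1)) < N (X (max M M1))" using M Nc N_sym by simp
    hence "N L = N (X (max M M1))" by (rule N_close)
    thus ?thesis using Nc by simp
  qed
  show ?thesis
  proof (intro exI conjI allI impI)
    show "L \<noteq> 0" using NL c by auto
    fix e :: real assume e: "0 < e" "e \<le> 1"
    obtain M where M: "\<forall>a\<ge>M. N (X a - L) < e * c" using L c e by (meson mult_pos_pos)
    show "eventually (\<lambda>K. rel N e (\<Prod>i<K. t i) L) sequentially"
      unfolding eventually_sequentially rel_def X_def[symmetric] NL using M by blast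
  qed
qed

definition HK :: "nat \<Rightarrow> 'f pt \<Rightarrow> 'k" where "HK K x = (\<Prod>i<K. F (sh (Suc i) x))"
definition H :: "'f pt \<Rightarrow> 'k" where
  "H x = (SOME L. L \<noteq> 0 \<and> (\<forall>e>0. e \<le> 1 \<longrightarrow> eventually (\<lambda>K. rel N e (HK K x) L) sequentially))"

lemma H_prop: assumes "x \<in> Ob"
  shows "H x \<noteq> 0 \<and> (\<forall>e>0. e \<le> 1 \<longrightarrow> eventually (\<lambda>K. rel N e (HK K x) (H x)) sequentially)"
proof -
  have "\<exists>L. L \<noteq> 0 \<and> (\<forall>e>0. e \<le> 1 \<longrightarrow> eventually (\<lambda>K. rel N e (HK K x) L) sequentially)"
    unfolding HK_def
  proof (rule prod_limit)
    show "\<forall>i. F (sh (Suc i) x) \<noteq> 0" using Fnz sh_in assms by blast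
    fix e :: real assume e: "0 < e"
    obtain D0 where D0: "\<forall>y\<in>Ob. agree D0 zp y \<longrightarrow> rel N e (F y) 1" using tail[OF e] by blast
    show "eventually (\<lambda>i. rel N e (F (sh (Suc i) x)) 1) sequentially"
      unfolding eventually_sequentially
    proof (intro exI allI impI)
      fix i assume "D0 \<le> i"
      hence "agree D0 zp (sh (Suc i) x)" by (intro agree_mono[OF agree_sh_zp]) simp
      thus "rel N e (F (sh (Suc i) x)) 1" using D0 sh_in assms by blast
    qed
  qed
  thus ?thesis unfolding H_def by (rule someI_ex)
qed

lemma H_nz: "x \<in> Ob \<Longrightarrow> H x \<noteq> 0" using H_prop by blast

lemma H_cont: assumes x: "x \<in> Ob" and e: "0 < e" "e \<le> 1"
  shows "eventually (\<lambda>D. \<forall>y\<in>Ob. agree D x y \<longrightarrow> rel N e (H y) (H x)) sequentially"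
proof -
  obtain D0 where D0: "\<forall>y\<in>Ob. agree D0 zp y \<longrightarrow> rel N e (F y) 1" using tail[OF e(1)] by blast
  have ev: "eventually (\<lambda>D. \<forall>i\<in>{..<D0}. \<forall>y\<in>Ob. agree D (sh i x) y \<longrightarrow> rel N e (F y) (F (sh i x))) sequentially"
    by (rule eventually_ball_finite) (use Fc[OF sh_in[OF x] e(1)] in auto)
  show ?thesis
  proof (rule eventually_mono[OF ev], intro ballI impI)
    fix D y assume hD: "\<forall>i\<in>{..<D0}. \<forall>y\<in>Ob. agree D (sh i x) y \<longrightarrow> rel N e (F y) (F (sh i x))"
      and y: "y \<in> Ob" and ag: "agree D x y"
    have hk: "rel N e (HK K y) (HK K x)" for K
      unfolding HK_def
    proof (rule rel_prod[OF finite_lessThan e], intro ballI)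
      fix i assume "i \<in> {..<K}"
      show "rel N e (F (sh (Suc i) y)) (F (sh (Suc i) x))"
      proof (cases "D0 \<le> Suc i")
        case True
        have "rel N e (F (sh (Suc i) y)) 1"
          using D0 agree_mono[OF agree_sh_zp True] sh_in[OF y] by blast
        moreover have "rel N e (F (sh (Suc i) x)) 1"
          using D0 agree_mono[OF agree_sh_zp True] sh_in[OF x] by blast
        ultimately show ?thesis using rel_trans rel_sym e(2) by blast
      next
        case False
        have "agree D (sh (Suc i) x) (sh (Suc i) y)" using agree_mono[OF agree_sh[OF ag]] by simp
        thus ?thesis using hD False sh_in[OF y] by auto
      qed
    qed
    have "eventually (\<lambda>K. rel N e (HK K x) (H x) \<and> rel N e (HK K y) (H y)) sequentially"
      using H_prop[OF x] H_prop[OF y] e by (intro eventually_conj) auto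
    then obtain K where K: "rel N e (HK K x) (H x)" "rel N e (HK K y) (H y)" using ev_obtain by blast
    show "rel N e (H y) (H x)"
      using rel_trans[OF rel_trans[OF rel_sym[OF K(2) e(2)] hk[of K] e(2)] K(1) e(2)] .
  qed
qed

end



context setting begin

lemma H_fin: assumes x: "x \<in> Ob" and trx: "tr D x = x"
  shows "H x * (\<Prod>r<D. F ((phi ^^ r) x)) = 1"
proof -
  define Pr where "Pr = (\<Prod>r<D. F ((phi ^^ r) x))"
  have Prnz: "Pr \<noteq> 0" unfolding Pr_def using Fnz phipow_in[OF x] by simp
  have "1 = H x * Pr"
  proof (rule rel_eq)
    show "H x * Pr \<noteq> 0" using H_nz[OF x] Prnz by simp
    fix e :: real assume e: "0 < e" "e \<le> 1"
    obtain D0 where D0: "\<forall>y\<in>Ob. agree D0 zp y \<longrightarrow> rel N e (F y) 1" using tail[OF e(1)] by blast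
    have ev1: "eventually (\<lambda>K. \<forall>i\<in>{..<D0}. \<forall>y\<in>Ob. agree K (sh i x) y \<longrightarrow> rel N e (F y) (F (sh i x))) sequentially"
      by (rule eventually_ball_finite) (use Fc[OF sh_in[OF x] e(1)] in auto)
    have ev2: "eventually (\<lambda>K. \<forall>r\<in>{..<D}. \<forall>y\<in>Ob. agree K ((phi ^^ r) x) y \<longrightarrow> rel N e (F y) (F ((phi ^^ r) x))) sequentially"
      by (rule eventually_ball_finite) (use Fc[OF phipow_in[OF x] e(1)] in auto)
    have ev3: "eventually (\<lambda>K. rel N e (HK K x) (H x)) sequentially" using H_prop[OF x] e by blast
    have "eventually (\<lambda>K. (\<forall>i\<in>{..<D0}. \<forall>y\<in>Ob. agree K (sh i x) y \<longrightarrow> rel N e (F y) (F (sh i x))) \<and>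
       (\<forall>r\<in>{..<D}. \<forall>y\<in>Ob. agree K ((phi ^^ r) x) y \<longrightarrow> rel N e (F y) (F ((phi ^^ r) x))) \<and>
       rel N e (HK K x) (H x) \<and> 1 \<le> K \<and> D0 \<le> K) sequentially"
      using ev1 ev2 ev3 eventually_ge_at_top by (intro eventually_conj) auto
    then obtain K where K1: "\<forall>i\<in>{..<D0}. \<forall>y\<in>Ob. agree K (sh i x) y \<longrightarrow> rel N e (F y) (F (sh i x))"
      and K2: "\<forall>r\<in>{..<D}. \<forall>y\<in>Ob. agree K ((phi ^^ r) x) y \<longrightarrow> rel N e (F y) (F ((phi ^^ r) x))"
      and K3: "rel N e (HK K x) (H x)" and K4: "1 \<le> K" and K5: "D0 \<le> K"
      using ev_obtain by blast
    define P where "P = K + D"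
    define y where "y = sh K x"
    define w where "w = rp P y"
    have P: "0 < P" using K4 unfolding P_def by simp
    have y: "y \<in> Ob" unfolding y_def using sh_in[OF x] .
    have w: "w \<in> Ob" unfolding w_def using rp_in[OF y] .
    have prodw: "(\<Prod>j<P. F ((phi ^^ j) w)) = 1"
    proof -
      have "\<forall>t<m. \<bar>valZ (piZ t) P (fst w t)\<bar> < 1"
      proof (intro allI impI)
        fix t assume t: "t < m"
        show "\<bar>valZ (piZ t) P (fst w t)\<bar> < 1"
        proof (rule valZ_lt)
          show "2 \<le> piZ t" using pZ t by simp
          show "\<forall>i. 0 \<le> fst w t i \<and> fst w t i < piZ t" using w t by (simp add: Obar_iff)
          show "fst w t 0 = 0" unfolding w_def y_def rp_def sh_def using K4 by simp
          show "0 < P" by (rule P)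
        qed
      qed
      moreover have "\<forall>t<l. absA (piA t) P (snd w t) < 1"
      proof (intro allI impI)
        fix t assume t: "t < l"
        show "absA (piA t) P (snd w t) < 1"
        proof (rule absA_lt)
          show "0 < degree (piA t)" using pA t by simp
          show "\<forall>i. degree (snd w t i) < degree (piA t)" using w t by (simp add: Obar_iff)
          show "0 < P" by (rule P)
        qed
      qed
      moreover have "(phi ^^ P) w = w" unfolding w_def by (rule rp_periodic[OF P])
      ultimately show ?thesis using periodic w by blast
    qed
    have relp: "rel N e (\<Prod>j<P. F ((phi ^^ j) w)) (\<Prod>j<P. F ((phi ^^ j) y))"
    proof (rule rel_prod[OF finite_lessThan e], intro ballI)
      fix j assume "j \<in> {..<P}"
      hence j: "j < P" by simp
      have ag: "agree K ((phi ^^ j) w) ((phi ^^ j) y)"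
        unfolding w_def y_def by (rule rp_agree[OF trx P_def j])
      have wj: "(phi ^^ j) w \<in> Ob" using phipow_in[OF w] .
      show "rel N e (F ((phi ^^ j) w)) (F ((phi ^^ j) y))"
      proof (cases "j < K")
        case True
        have yj: "(phi ^^ j) y = sh (K - j) x" unfolding y_def using True by (simp add: phi_pow_sh)
        show ?thesis
        proof (cases "D0 \<le> K - j")
          case True
          have a1: "agree (K - j) zp (sh (K - j) x)" by (rule agree_sh_zp)
          have a2: "agree (K - j) (sh (K - j) x) ((phi ^^ j) w)"
            using agree_mono[OF agree_sym[OF ag]] yj by simp
          have "agree D0 zp ((phi ^^ j) w)"
            using agree_mono[OF agree_trans[OF a1 a2] True] .
          hence r1: "rel N e (F ((phi ^^ j) w)) 1" using D0 wj by blast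
          have "agree D0 zp (sh (K - j) x)" using agree_mono[OF a1 True] .
          hence r2: "rel N e (F (sh (K - j) x)) 1" using D0 sh_in[OF x] by blast
          show ?thesis unfolding yj using rel_trans[OF r1 rel_sym[OF r2 e(2)] e(2)] .
        next
          case False
          have "agree K (sh (K - j) x) ((phi ^^ j) w)" using agree_sym[OF ag] yj by simp
          thus ?thesis unfolding yj using K1 False wj by auto
        qed
      next
        case False
        define r where "r = j - K"
        have jr: "j = K + r" and r: "r < D" using False j unfolding r_def P_def by auto
        have yj: "(phi ^^ j) y = (phi ^^ r) x" unfolding y_def jr by (rule phi_pow_sh2)
        have "agree K ((phi ^^ r) x) ((phi ^^ j) w)" using agree_sym[OF ag] yj by simp
        thus ?thesis unfolding yj using K2 r wj by auto
      qed
    qed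
    have split: "(\<Prod>j<P. F ((phi ^^ j) y)) = HK K x * Pr"
    proof -
      have "(\<Prod>j<P. F ((phi ^^ j) y)) = (\<Prod>j<K. F ((phi ^^ j) y)) * (\<Prod>r<D. F ((phi ^^ (K + r)) y))"
        unfolding P_def by (rule prod_split)
      moreover have "(\<Prod>r<D. F ((phi ^^ (K + r)) y)) = Pr"
        unfolding Pr_def y_def phi_pow_sh2 ..
      moreover have "(\<Prod>j<K. F ((phi ^^ j) y)) = HK K x"
      proof -
        have "HK K x = (\<Prod>j<K. F (sh (Suc (K - Suc j)) x))"
          unfolding HK_def by (rule prod.nat_diff_reindex[symmetric])
        also have "\<dots> = (\<Prod>j<K. F ((phi ^^ j) y))"
          unfolding y_def by (rule prod.cong) (auto simp: phi_pow_sh Suc_diff_Suc)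
        finally show ?thesis by simp
      qed
      ultimately show ?thesis by simp
    qed
    have "rel N e 1 (HK K x * Pr)" using relp prodw split by simp
    moreover have "rel N e (HK K x * Pr) (H x * Pr)"
      by (rule rel_mult[OF K3 rel_refl[OF e(1) Prnz] e(2)])
    ultimately show "rel N e 1 (H x * Pr)" using rel_trans e(2) by blast
  qed
  thus ?thesis unfolding Pr_def by simp
qed

lemma fin_ident: assumes x: "x \<in> Ob" and trx: "tr (Suc D) x = x"
  shows "F x * H x = H (phi x)"
proof -
  define Q where "Q = (\<Prod>r<D. F ((phi ^^ r) (phi x)))"
  have Qnz: "Q \<noteq> 0" unfolding Q_def using Fnz phipow_in[OF phi_in[OF x]] by simp
  have h1: "H x * (\<Prod>r<Suc D. F ((phi ^^ r) x)) = 1" by (rule H_fin[OF x trx])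
  have "tr D (phi x) = phi x" using phi_tr[of D x] trx by simp
  hence h2: "H (phi x) * Q = 1" unfolding Q_def by (rule H_fin[OF phi_in[OF x]])
  have "(\<Prod>r<Suc D. F ((phi ^^ r) x)) = F x * Q"
    unfolding prod.lessThan_Suc_shift Q_def by (simp add: funpow_Suc_right del: funpow.simps)
  hence "(F x * H x) * Q = H (phi x) * Q" using h1 h2 by (simp add: ac_simps)
  thus ?thesis using Qnz by simp
qed

lemma ident: assumes x: "x \<in> Ob" shows "F x * H x = H (phi x)"
proof (rule rel_eq)
  show "H (phi x) \<noteq> 0" using H_nz[OF phi_in[OF x]] .
  fix e :: real assume e: "0 < e" "e \<le> 1"
  have "eventually (\<lambda>D. (\<forall>y\<in>Ob. agree D x y \<longrightarrow> rel N e (H y) (H x)) \<and>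
      (\<forall>y\<in>Ob. agree D (phi x) y \<longrightarrow> rel N e (H y) (H (phi x))) \<and>
      (\<forall>y\<in>Ob. agree D x y \<longrightarrow> rel N e (F y) (F x))) sequentially"
    using H_cont[OF x e] H_cont[OF phi_in[OF x] e] Fc[OF x e(1)] by (intro eventually_conj)
  then obtain D where D1: "\<forall>y\<in>Ob. agree D x y \<longrightarrow> rel N e (H y) (H x)"
    and D2: "\<forall>y\<in>Ob. agree D (phi x) y \<longrightarrow> rel N e (H y) (H (phi x))"
    and D3: "\<forall>y\<in>Ob. agree D x y \<longrightarrow> rel N e (F y) (F x)" using ev_obtain by blast
  define z where "z = tr (Suc D) x"
  have z: "z \<in> Ob" unfolding z_def using tr_in[OF x] .
  have az: "agree D x z" unfolding z_def using agree_mono[OF agree_tr[of "Suc D" x]] by simp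
  have pz: "phi z = tr D (phi x)" unfolding z_def by (rule phi_tr)
  have apz: "agree D (phi x) (phi z)" unfolding pz by (rule agree_tr)
  have r1: "rel N e (H z) (H x)" using D1 z az by blast
  have r2: "rel N e (H (phi z)) (H (phi x))" using D2 phi_in[OF z] apz by blast
  have r3: "rel N e (F z) (F x)" using D3 z az by blast
  have fz: "F z * H z = H (phi z)" by (rule fin_ident[OF z, of D]) (simp add: z_def tr_tr)
  have "rel N e (F x * H x) (F z * H z)"
    by (rule rel_mult[OF rel_sym[OF r3 e(2)] rel_sym[OF r1 e(2)] e(2)])
  thus "rel N e (F x * H x) (H (phi x))" unfolding fz using rel_trans[OF _ r2 e(2)] by blast
qed

lemma result: "\<exists>G :: 'f pt \<Rightarrow> 'k. cont_Obar m l piZ piA N G \<and>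
           (\<forall>x\<in>Obar m l piZ piA. G x \<noteq> 0) \<and>
           (\<forall>x\<in>Obar m l piZ piA. F x = G x / G (phi x))"
proof (intro exI conjI ballI)
  define G where "G x = inverse (H x)" for x
  show "cont_Obar m l piZ piA N G" unfolding cont_Obar_def
  proof (intro ballI allI impI)
    fix x e assume x: "x \<in> Ob" and e: "(0::real) < e"
    have Gp: "0 < N (G x)" unfolding G_def using H_nz[OF x] N_pos by simp
    define \<epsilon> where "\<epsilon> = min 1 (e / N (G x))"
    have eps: "0 < \<epsilon>" "\<epsilon> \<le> 1" "\<epsilon> * N (G x) \<le> e" using e Gp unfolding \<epsilon>_def
      by (auto simp: min_def field_simps)
    obtain D where D: "\<forall>y\<in>Ob. agree D x y \<longrightarrow> rel N \<epsilon> (H y) (H x)"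
      using ev_obtain[OF H_cont[OF x eps(1,2)]] by blast
    show "\<exists>D. \<forall>y\<in>Ob. agree D x y \<longrightarrow> N (G y - G x) < e"
    proof (intro exI ballI impI)
      fix y assume "y \<in> Ob" "agree D x y"
      hence "rel N \<epsilon> (G y) (G x)" unfolding G_def using D rel_inverse eps(2) by blast
      thus "N (G y - G x) < e" using eps unfolding rel_def by simp
    qed
  qed
  fix x assume x: "x \<in> Ob"
  show "G x \<noteq> 0" unfolding G_def using H_nz[OF x] by simp
  show "F x = G x / G (phi x)" unfolding G_def using ident[OF x] H_nz[OF x]
    by (simp add: field_simps)
qed

end

theorem mainTheorem4:
  fixes m l :: nat
    and piZ :: "nat \<Rightarrow> int"
    and piA :: "nat \<Rightarrow> 'f::{finite,field} poly"
    and N :: "'k::field \<Rightarrow> real"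
    and F :: "'f pt \<Rightarrow> 'k"
  assumes piZ: "\<forall>t<m. \<exists>(p::nat) e. prime p \<and> 1 \<le> e \<and> piZ t = int p ^ e"
    and piA: "\<forall>t<l. \<exists>v e. lead_coeff v = 1 \<and> irreducible v \<and> 1 \<le> e \<and> piA t = v ^ e"
    and K: "nonarch_abs N" "abs_complete N"
    and Fcont: "cont_Obar m l piZ piA N F"
    and Fnz: "\<forall>x\<in>Obar m l piZ piA. F x \<noteq> 0"
    and periodic: "\<forall>n::nat. \<forall>x\<in>Obar m l piZ piA.
        (\<forall>t<m. \<bar>valZ (piZ t) n (fst x t)\<bar> < 1) \<longrightarrow>
        (\<forall>t<l. absA (piA t) n (snd x t) < 1) \<longrightarrow>
        (phi ^^ n) x = x \<longrightarrow> (\<Prod>j<n. F ((phi ^^ j) x)) = 1"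
  shows "\<exists>G :: 'f pt \<Rightarrow> 'k. cont_Obar m l piZ piA N G \<and>
           (\<forall>x\<in>Obar m l piZ piA. G x \<noteq> 0) \<and>
           (\<forall>x\<in>Obar m l piZ piA. F x = G x / G (phi x))"
proof -
  have pZ: "\<forall>t<m. 2 \<le> piZ t"
  proof (intro allI impI)
    fix t assume "t < m"
    then obtain p :: nat and e where pe: "prime p" "1 \<le> e" "piZ t = int p ^ e" using piZ by blast
    have p2: "2 \<le> int p" using prime_ge_2_nat[OF pe(1)] by simp
    have "int p \<le> int p ^ e" by (rule self_le_power) (use p2 pe(2) in auto)
    thus "2 \<le> piZ t" using p2 pe(3) by linarith
  qed
  have pA: "\<forall>t<l. 0 < degree (piA t)"
  proof (intro allI impI)
    fix t assume "t < l"
    then obtain v e where ve: "irreducible v" "1 \<le> e" "piA t = v ^ e" using piA by blast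
    have v0: "v \<noteq> 0" using ve(1) by auto
    have "\<not> is_unit v" using irreducible_not_unit[OF ve(1)] .
    hence "degree v \<noteq> 0" using is_unit_iff_degree[OF v0] by simp
    thus "0 < degree (piA t)" using ve(2,3) v0 by (simp add: degree_power_eq)
  qed
  interpret setting N m l piZ piA F
    by unfold_locales (use K Fcont Fnz periodic pZ pA in auto)
  show ?thesis by (rule result)
qed

end
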